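(* Let $d=1$, let $A\subset[0,1]$ be a fat Cantor set, let $c=\lambda(A)^{-1}$ and $f^\dagger(x)=c\,\mathbf 1_A(x)$ for $x\in\mathbb{R}$. Then $f^\dagger$ is a probability density on $\mathbb{R}$ with finite second moment, and $$\inf_{g\in\mathcal M}\mathrm{KL}(f^\dagger\|g)=0,\qquad f^\dagger\notin\mathcal F_{\mathrm{Ent}},\qquad f^\dagger\notin\mathcal F_{\mathrm{CSSA}}.$$
   Context: $\lambda$ is Lebesgue measure. A fat Cantor set is a compact nowhere dense subset of $[0,1]$ with strictly positive Lebesgue measure. $\log_+t=\max\{\log t,0\}$ for $t>0$, $\log_+0=0$. $\mathcal F_{\mathrm{Ent}}$ is the class of all continuous, strictly positive probability densities $f$ on $\mathbb{R}^d$ with $\int f\log_+f\,\mathrm{d}x<\infty$. Densities are w.r.t. Lebesgue measure; $F(A)=\int_Af\,\mathrm{d}x$; $\operatorname{supp}(f)=\{x:f(x)>0\}$. Comparison cubes are closed axis-aligned cubes (closed intervals when $d=1$); partition cubes may be half-open so as to be disjoint. "A cube of side $r$ with a vertex at $y$" means a closed axis-aligned cube of side length $r$ having $y$ as one of its vertices. A family of cubes of common side length is adjacent if they have pairwise disjoint interiors and the union of their closures is connected. Definition ($\mathcal F_{\mathrm{FSSA}}$): a density $f$ on $\mathbb{R}^d$ belongs to $\mathcal F_{\mathrm{FSSA}}$ if there exist, for each $m\ge1$, a partition $\operatorname{supp}(f)=A^{(m)}_0\sqcup A^{(m)}_1\sqcup\cdots\sqcup A^{(m)}_m$ in which $A^{(m)}_1,\dots,A^{(m)}_m$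 are adjacent cubes of common side length $h_m>0$ and $A^{(m)}_0$ is the remainder, such that: (i) $f$ is continuous on $\operatorname{supp}(f)$ except on a set of $F$-measure zero; (ii) there exist $r>0$ and, for every $y\in\operatorname{supp}(f)$, a comparison cube $C(r,y)$ of side length $r$ containing $y$, such that $D_r(y)=\log\big(f(y)/\inf_{z\in C(r,y)}f(z)\big)$ is measurable on $\operatorname{supp}(f)$ and $\int_{\operatorname{supp}(f)}D_r\,\mathrm{d}F<\infty$; (iii) there exists $M\in\mathbb N$ such that for every $m\ge M$: (a) if $y\in A^{(m)}_0$ then $C(r,y)\cap A^{(m)}_0$ contains a cube of side $r/2$ with a vertex at $y$; (b) if $y\in\operatorname{supp}(f)\setminus A^{(m)}_0$ then $C(r,y)\cap(\operatorname{supp}(f)\setminus A^{(m)}_0)$ contains a cube of side $r/2$ with a vertex at $y$. Definition ($\mathcal F_{\mathrm{CSSA}}$): a density $f$ belongs to $\mathcal F_{\mathrm{CSSA}}$ if there exist a measurable partition $\operatorname{supp}(f)=\bigsqcup_{\ell\ge1}Y_\ell$ with $p_\ell=F(Y_\ell)$, and, for each $\ell$ with $p_\ell>0$, a scale $r_\ell>0$, comparison cubes $C_\ell(y)$ of side $r_\ell$ containing $y$ ($y\in Y_\ell$), and for every $m\ge1$ a partition $Y_\ell=A^{(m)}_{\ell,0}\sqcup\cdots\sqcup A^{(m)}_{\ell,m}$ with $A^{(m)}_{\ell,1},\dots,A^{(m)}_{\ell,m}$ adjacent cubes of common side $h_{\ell,m}>0$, such that for each $\ell$ with $p_\ell>0$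 the normalized restriction $f_\ell=f\mathbf 1_{Y_\ell}/p_\ell$ satisfies the definition of $\mathcal F_{\mathrm{FSSA}}$ with these witnesses (scale $r_\ell$, cubes $C_\ell(y)$, these partitions), and, with $F_\ell$ the law of density $f_\ell$ and $D_\ell(y)=\log\big(f_\ell(y)/\inf_{z\in C_\ell(y)}f_\ell(z)\big)$ for $y\in Y_\ell$, one has $\sum_{\ell:p_\ell>0}p_\ell\int_{Y_\ell}D_\ell\,\mathrm{d}F_\ell<\infty$ and $\sum_{\ell:p_\ell>0}p_\ell\log_+(1/r_\ell)<\infty$. $\mathrm{KL}(f\|g)=\int f\log(f/g)\,\mathrm{d}x\in[0,\infty]$. $\mathcal M$ denotes the class of all finite Gaussian mixture densities: $x\mapsto\sum_{j=1}^m\pi_j\varphi(x;\mu_j,\Sigma_j)$ with $m\in\mathbb N$, $\pi_j\ge0$, $\sum_j\pi_j=1$, $\Sigma_j\succ0$, $\varphi(\cdot;\mu,\Sigma)$ the $N(\mu,\Sigma)$ density. *)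

theory Defs
  imports "HOL-Probability.Probability"
begin

text \<open>Everything is specialised to dimension d = 1: densities are functions real => real,
  densities are taken w.r.t. Lebesgue measure, cubes are intervals.\<close>

definition is_density :: "(real \<Rightarrow> real) \<Rightarrow> bool" where
  "is_density f \<longleftrightarrow> f \<in> borel_measurable lebesgue \<and> (\<forall>x. 0 \<le> f x)
     \<and> (\<integral>\<^sup>+ x. ennreal (f x) \<partial>lebesgue) = 1"

definition supp :: "(real \<Rightarrow> real) \<Rightarrow> real set" where
  "supp f = {x. f x > 0}"

definition Fmeas :: "(real \<Rightarrow> real) \<Rightarrow> real set \<Rightarrow> ennreal" where
  "Fmeas f B = (\<integral>\<^sup>+ x. indicator B x * ennreal (f x) \<partial>lebesgue)"

definition fat_cantor :: "real set \<Rightarrow> bool" where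
  "fat_cantor A \<longleftrightarrow> compact A \<and> A \<subseteq> {0..1} \<and> interior (closure A) = {}
     \<and> emeasure lebesgue A > 0"

definition log_plus :: "real \<Rightarrow> real" where
  "log_plus t = (if t > 0 then max (ln t) 0 else 0)"

definition kl_pt :: "real \<Rightarrow> real \<Rightarrow> ereal" where
  "kl_pt a b = (if a = 0 then 0 else if b = 0 then \<infinity> else ereal (a * ln (a / b)))"

definition KL :: "(real \<Rightarrow> real) \<Rightarrow> (real \<Rightarrow> real) \<Rightarrow> ereal" where
  "KL f g = enn2ereal (\<integral>\<^sup>+ x. e2ennreal (kl_pt (f x) (g x)) \<partial>lebesgue)
          - enn2ereal (\<integral>\<^sup>+ x. e2ennreal (- kl_pt (f x) (g x)) \<partial>lebesgue)"

text \<open>Finite Gaussian mixtures in dimension 1 (covariance = variance sigma^2 > 0).\<close>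
definition gauss_mixtures :: "(real \<Rightarrow> real) set" where
  "gauss_mixtures = {g. \<exists>(m::nat) (w::nat \<Rightarrow> real) (\<mu>::nat \<Rightarrow> real) (\<sigma>::nat \<Rightarrow> real).
      m \<ge> 1 \<and> (\<forall>j<m. 0 \<le> w j \<and> 0 < \<sigma> j) \<and> (\<Sum>j<m. w j) = 1
      \<and> g = (\<lambda>x. \<Sum>j<m. w j * normal_density (\<mu> j) (\<sigma> j) x)}"

definition F_Ent :: "(real \<Rightarrow> real) set" where
  "F_Ent = {f. is_density f \<and> continuous_on UNIV f \<and> (\<forall>x. f x > 0)
      \<and> (\<integral>\<^sup>+ x. ennreal (f x * log_plus (f x)) \<partial>lebesgue) < \<infinity>}"

definition comp_cube :: "real \<Rightarrow> real set \<Rightarrow> bool" where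
  "comp_cube r Q \<longleftrightarrow> (\<exists>a. Q = {a..a+r})"

definition part_cube :: "real \<Rightarrow> real set \<Rightarrow> bool" where
  "part_cube h Q \<longleftrightarrow> (\<exists>a. Q = {a..a+h} \<or> Q = {a..<a+h} \<or> Q = {a<..a+h})"

definition vertex_cube :: "real \<Rightarrow> real \<Rightarrow> real set \<Rightarrow> bool" where
  "vertex_cube s y Q \<longleftrightarrow> Q = {y..y+s} \<or> Q = {y-s..y}"

definition adjacent_cubes :: "real \<Rightarrow> nat \<Rightarrow> (nat \<Rightarrow> real set) \<Rightarrow> bool" where
  "adjacent_cubes h m Q \<longleftrightarrow> (\<forall>i\<in>{1..m}. part_cube h (Q i))
     \<and> (\<forall>i\<in>{1..m}. \<forall>j\<in>{1..m}. i \<noteq> j \<longrightarrow> interior (Q i) \<inter> interior (Q j) = {})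
     \<and> connected (\<Union>i\<in>{1..m}. closure (Q i))"

definition Dfun :: "(real \<Rightarrow> real) \<Rightarrow> (real \<Rightarrow> real set) \<Rightarrow> real \<Rightarrow> ereal" where
  "Dfun f C y = (let i = Inf (f ` C y) in if i \<le> 0 then \<infinity> else ereal (ln (f y / i)))"

text \<open>Conditions of the definition of F_FSSA for f with witnesses r, C (comparison cubes) and
  A (A m i is the i-th piece of the m-th partition, i = 0..m).\<close>
definition fssa_conds :: "(real \<Rightarrow> real) \<Rightarrow> real \<Rightarrow> (real \<Rightarrow> real set) \<Rightarrow> (nat \<Rightarrow> nat \<Rightarrow> real set) \<Rightarrow> bool" where
  "fssa_conds f r C A \<longleftrightarrow>
     (\<forall>m\<ge>1. supp f = (\<Union>i\<le>m. A m i) \<and> disjoint_family_on (A m) {..m}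
        \<and> (\<exists>h>0. adjacent_cubes h m (A m)))
   \<and> (\<exists>N. N \<in> sets lebesgue \<and> Fmeas f N = 0
        \<and> (\<forall>y\<in>supp f - N. continuous (at y within supp f) f))
   \<and> r > 0
   \<and> (\<forall>y\<in>supp f. comp_cube r (C y) \<and> y \<in> C y)
   \<and> (\<lambda>y. if y \<in> supp f then Dfun f C y else 0) \<in> borel_measurable lebesgue
   \<and> (\<integral>\<^sup>+ y. indicator (supp f) y * ennreal (f y) * e2ennreal (Dfun f C y) \<partial>lebesgue) < \<infinity>
   \<and> (\<exists>M::nat. \<forall>m\<ge>M.
        (\<forall>y\<in>A m 0. \<exists>Q. vertex_cube (r/2) y Q \<and> Q \<subseteq> C y \<inter> A m 0)
      \<and> (\<forall>y\<in>supp f - A m 0. \<exists>Q. vertex_cube (r/2) y Q \<and> Q \<subseteq> C y \<inter> (supp f - A m 0)))"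

definition F_FSSA :: "(real \<Rightarrow> real) set" where
  "F_FSSA = {f. is_density f \<and> (\<exists>r C A. fssa_conds f r C A)}"

definition F_CSSA :: "(real \<Rightarrow> real) set" where
  "F_CSSA = {f. is_density f \<and>
     (\<exists>(Y::nat \<Rightarrow> real set) (r::nat \<Rightarrow> real) (C::nat \<Rightarrow> real \<Rightarrow> real set)
        (A::nat \<Rightarrow> nat \<Rightarrow> nat \<Rightarrow> real set).
       let p = (\<lambda>l. enn2real (Fmeas f (Y l)));
           fl = (\<lambda>l x. f x * indicator (Y l) x / p l)
       in (\<forall>l\<ge>1. Y l \<in> sets lebesgue)
        \<and> supp f = (\<Union>l\<in>{1..}. Y l) \<and> disjoint_family_on Y {1..}
        \<and> (\<forall>l\<ge>1. p l > 0 \<longrightarrow> is_density (fl l) \<and> fssa_conds (fl l) (r l) (C l) (A l))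
        \<and> (\<Sum>l. if l \<ge> 1 \<and> p l > 0 then ennreal (p l) *
              (\<integral>\<^sup>+ y. indicator (Y l) y * ennreal (fl l y) * e2ennreal (Dfun (fl l) (C l) y) \<partial>lebesgue)
            else 0) < \<infinity>
        \<and> (\<Sum>l. if l \<ge> 1 \<and> p l > 0 then ennreal (p l * log_plus (1 / r l)) else 0) < \<infinity>)}"

end

theory Submission
  imports Defs
begin


locale fc =
  fixes A :: "real set" and c :: real and fd :: "real \<Rightarrow> real"
  assumes fat: "fat_cantor A"
    and c_def: "c = 1 / measure lebesgue A"
    and fd_def: "fd = (\<lambda>x. c * indicator A x)"
begin

lemma A_compact: "compact A" and A_sub: "A \<subseteq> {0..1}" and A_int: "interior A = {}"
  and A_pos: "emeasure lebesgue A > 0"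
  using fat compact_imp_closed[of A] unfolding fat_cantor_def by (auto simp: closure_closed)

lemma A_borel[measurable]: "A \<in> sets borel"
  using A_compact by (simp add: borel_compact)

lemma A_fin: "emeasure lborel A < \<infinity>"
proof -
  have "emeasure lborel A \<le> emeasure lborel {0..1::real}"
    using A_sub by (intro emeasure_mono) auto
  then show ?thesis by (simp add: order_le_less_trans)
qed

lemma A_leb: "emeasure lebesgue A = emeasure lborel A"
  by (simp add: emeasure_completion)

definition "a = measure lborel A"

lemma a_eq: "emeasure lborel A = ennreal a"
  using A_fin by (simp add: a_def emeasure_eq_ennreal_measure)

lemma a_pos: "a > 0"
  using A_pos A_leb a_eq by (metis ennreal_less_zero_iff le_less_linear measure_nonneg a_def)

lemma c_eq: "c = 1 / a"
  using c_def A_leb by (simp add: a_def measure_def)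

lemma c_pos: "c > 0" using c_eq a_pos by simp

lemma A_ne: "A \<noteq> {}" using a_pos a_def by auto

lemma fd_borel[measurable]: "fd \<in> borel_measurable borel"
  unfolding fd_def by measurable

lemma fd_nonneg: "0 \<le> fd x" using c_pos by (simp add: fd_def)

lemma int_indA: "(\<integral>\<^sup>+ x. ennreal (c * indicator A x) \<partial>lborel) = 1"
proof -
  have "(\<integral>\<^sup>+ x. ennreal (c * indicator A x) \<partial>lborel) = (\<integral>\<^sup>+ x. ennreal c * indicator A x \<partial>lborel)"
    by (intro nn_integral_cong) (auto simp: indicator_def)
  also have "\<dots> = ennreal c * emeasure lborel A"
    by (simp add: nn_integral_cmult_indicator)
  also have "\<dots> = 1" using a_eq c_eq a_pos by (simp flip: ennreal_mult)
  finally show ?thesis .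
qed

lemma is_dens: "is_density fd"
  unfolding is_density_def
  using int_indA fd_nonneg by (simp add: nn_integral_completion fd_def measurable_completion)

lemma moment: "(\<integral>\<^sup>+ x. ennreal (x^2 * fd x) \<partial>lebesgue) < \<infinity>"
proof -
  have "(\<integral>\<^sup>+ x. ennreal (x^2 * fd x) \<partial>lebesgue) \<le> (\<integral>\<^sup>+ x. ennreal (c * indicator A x) \<partial>lborel)"
    unfolding nn_integral_completion
  proof (intro nn_integral_mono)
    fix x
    show "ennreal (x^2 * fd x) \<le> ennreal (c * indicator A x)"
    proof (cases "x \<in> A")
      case True
      then have "x^2 \<le> 1" using A_sub by (auto intro!: power_le_one)
      then show ?thesis using True c_pos by (auto simp: fd_def intro!: ennreal_leI)
    qed (simp add: fd_def)
  qed
  then show ?thesis using int_indA by (simp add: order_le_less_trans)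
qed

lemma not_Ent: "fd \<notin> F_Ent"
proof
  assume "fd \<in> F_Ent"
  then have "fd 2 > 0" by (simp add: F_Ent_def)
  moreover have "(2::real) \<notin> A" using A_sub by auto
  ultimately show False by (simp add: fd_def)
qed

lemma supp_fd: "supp fd = A"
  using c_pos by (auto simp: supp_def fd_def indicator_def)

lemma Fmeas_dens: "B \<in> sets lebesgue \<Longrightarrow> Fmeas fd B = emeasure (density lebesgue (\<lambda>x. ennreal (fd x))) B"
  by (simp add: Fmeas_def emeasure_density measurable_completion mult.commute)

lemma Fmeas_le1: "Fmeas fd B \<le> 1"
proof -
  have "Fmeas fd B \<le> (\<integral>\<^sup>+ x. ennreal (fd x) \<partial>lebesgue)"
    unfolding Fmeas_def by (intro nn_integral_mono) (auto simp: indicator_def)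
  then show ?thesis using is_dens by (simp add: is_density_def)
qed

lemma Fmeas_A: "Fmeas fd A = 1"
proof -
  have "Fmeas fd A = (\<integral>\<^sup>+ x. ennreal (c * indicator A x) \<partial>lborel)"
    unfolding Fmeas_def nn_integral_completion
    by (intro nn_integral_cong) (auto simp: fd_def indicator_def)
  then show ?thesis using int_indA by simp
qed

lemma not_CSSA: "fd \<notin> F_CSSA"
proof
  assume "fd \<in> F_CSSA"
  then obtain Y :: "nat \<Rightarrow> real set" and r :: "nat \<Rightarrow> real" and C and AA :: "nat \<Rightarrow> nat \<Rightarrow> nat \<Rightarrow> real set"
    where Ymeas: "\<forall>l\<ge>1. Y l \<in> sets lebesgue"
      and Yun: "supp fd = (\<Union>l\<in>{1..}. Y l)"
      and fs: "\<forall>l\<ge>1. enn2real (Fmeas fd (Y l)) > 0 \<longrightarrow>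
          is_density (\<lambda>x. fd x * indicator (Y l) x / enn2real (Fmeas fd (Y l))) \<and> fssa_conds (\<lambda>x. fd x * indicator (Y l) x / enn2real (Fmeas fd (Y l))) (r l) (C l) (AA l)"
    unfolding F_CSSA_def Let_def mem_Collect_eq by (elim conjE exE) (rule that, assumption+)
  define D where "D = density lebesgue (\<lambda>x. ennreal (fd x))"
  have "\<exists>l\<ge>1. enn2real (Fmeas fd (Y l)) > 0"
  proof (rule ccontr)
    assume "\<not> ?thesis"
    then have z: "Fmeas fd (Y l) = 0" if "l \<ge> 1" for l
    proof -
      have "enn2real (Fmeas fd (Y l)) = 0" using that \<open>\<not> _\<close> enn2real_nonneg[of "Fmeas fd (Y l)"]
        by (meson linorder_not_le order_antisym)
      moreover have "Fmeas fd (Y l) \<noteq> top" using Fmeas_le1[of "Y l"] by (metis ennreal_one_less_top leD)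
      ultimately show ?thesis by (simp add: enn2real_eq_0_iff)
    qed
    have r: "{1::nat..} = range Suc" by (auto simp: image_iff) (metis Suc_pred' less_eq_Suc_le)
    have "A = (\<Union>l. Y (Suc l))"
      using Yun supp_fd unfolding r by (simp add: image_image)
    moreover have "(\<Union>l. Y (Suc l)) \<in> sets lebesgue" using Ymeas by auto
    ultimately have "Fmeas fd A = emeasure D (\<Union>l. Y (Suc l))"
      using Fmeas_dens D_def by simp
    also have "\<dots> \<le> (\<Sum>l. emeasure D (Y (Suc l)))"
      using Ymeas by (intro emeasure_subadditive_countably) (auto simp: D_def)
    also have "\<dots> = 0"
      using z Ymeas Fmeas_dens D_def by simp
    finally show False using Fmeas_A by simp
  qed
  then obtain l where l1: "l \<ge> 1" and pl: "enn2real (Fmeas fd (Y l)) > 0" by blast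
  define fl where "fl = (\<lambda>x. fd x * indicator (Y l) x / enn2real (Fmeas fd (Y l)))"
  have "fssa_conds fl (r l) (C l) (AA l)" using fs l1 pl by (simp add: fl_def)
  then have "\<forall>m\<ge>1. supp fl = (\<Union>i\<le>m. AA l m i) \<and> disjoint_family_on (AA l m) {..m}
        \<and> (\<exists>h>0. adjacent_cubes h m (AA l m))"
    unfolding fssa_conds_def by (elim conjE)
  then have "supp fl = (\<Union>i\<le>1. AA l 1 i) \<and> (\<exists>h>0. adjacent_cubes h 1 (AA l 1))"
    by (metis order_refl)
  then obtain h where h0: "h > 0" and sp: "supp fl = (\<Union>i\<le>1. AA l 1 i)"
      and adj: "adjacent_cubes h 1 (AA l 1)" by blast
  have "part_cube h (AA l 1 1)" using adj by (simp add: adjacent_cubes_def)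
  then obtain u where "{u<..<u+h} \<subseteq> AA l 1 1" unfolding part_cube_def
    by (metis greaterThanLessThan_subseteq_atLeastAtMost_iff greaterThanLessThan_subseteq_atLeastLessThan_iff
       greaterThanLessThan_subseteq_greaterThanAtMost_iff order_refl)
  also have "\<dots> \<subseteq> supp fl" using sp by auto
  also have "\<dots> \<subseteq> A" by (auto simp: supp_def fl_def fd_def indicator_def split: if_splits)
  finally have "{u<..<u+h} \<subseteq> interior A" by (simp add: interior_maximal)
  then have "u + h/2 \<in> interior A" using h0 by auto
  then show False using A_int by simp
qed

end



lemma mix_props:
  assumes "g \<in> gauss_mixtures"
  shows "g \<in> borel_measurable borel" "\<And>x. g x > 0" "(\<integral>\<^sup>+ x. ennreal (g x) \<partial>lborel) = 1"
proof -
  obtain m w \<sigma> \<mu> where m: "(m::nat) \<ge> 1" and ws: "\<forall>j<m. 0 \<le> w j \<and> 0 < \<sigma> j" and s1: "(\<Sum>j<m. w j) = 1"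
    and g: "g = (\<lambda>x. \<Sum>j<m. w j * normal_density (\<mu> j) (\<sigma> j) x)"
    using assms unfolding gauss_mixtures_def mem_Collect_eq by (elim exE conjE) (rule that, assumption+)
  show "g \<in> borel_measurable borel" unfolding g by (rule borel_measurable_sum) simp
  have "\<exists>j<m. w j > 0"
  proof (rule ccontr)
    assume "\<not> (\<exists>j<m. w j > 0)"
    then have "\<forall>j<m. w j = 0" using ws by (meson antisym not_le)
    then show False using s1 by simp
  qed
  then obtain j where j: "j < m" "w j > 0" by blast
  show "g x > 0" for x
  proof -
    have "0 < w j * normal_density (\<mu> j) (\<sigma> j) x" using j ws by (simp add: normal_density_pos)
    also have "\<dots> \<le> (\<Sum>j<m. w j * normal_density (\<mu> j) (\<sigma> j) x)"
      using j ws by (intro member_le_sum) auto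
    finally show ?thesis by (simp add: g)
  qed
  have "(\<integral>\<^sup>+ x. ennreal (g x) \<partial>lborel) = (\<integral>\<^sup>+ x. (\<Sum>j<m. ennreal (w j * normal_density (\<mu> j) (\<sigma> j) x)) \<partial>lborel)"
    unfolding g using ws by (intro nn_integral_cong sum_ennreal[symmetric]) auto
  also have "\<dots> = (\<Sum>j<m. (\<integral>\<^sup>+ x. ennreal (w j * normal_density (\<mu> j) (\<sigma> j) x) \<partial>lborel))"
    by (intro nn_integral_sum) auto
  also have "\<dots> = (\<Sum>j<m. ennreal (w j))"
  proof (intro sum.cong refl)
    fix i assume "i \<in> {..<m}"
    then have i: "0 \<le> w i" "0 < \<sigma> i" using ws by auto
    have "(\<integral>\<^sup>+ x. ennreal (w i * normal_density (\<mu> i) (\<sigma> i) x) \<partial>lborel)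
        = ennreal (\<integral>x. w i * normal_density (\<mu> i) (\<sigma> i) x \<partial>lborel)"
      using i by (intro nn_integral_eq_integral) (auto intro!: integrable_mult_right)
    also have "\<dots> = ennreal (w i)" using i by simp
    finally show "(\<integral>\<^sup>+ x. ennreal (w i * normal_density (\<mu> i) (\<sigma> i) x) \<partial>lborel) = ennreal (w i)" .
  qed
  also have "\<dots> = ennreal (\<Sum>j<m. w j)" using ws by (intro sum_ennreal) auto
  also have "\<dots> = 1" using s1 by simp
  finally show "(\<integral>\<^sup>+ x. ennreal (g x) \<partial>lborel) = 1" .
qed

context fc begin

lemma KL_nonneg:
  assumes "g \<in> gauss_mixtures"
  shows "KL fd g \<ge> 0"
proof -
  note gp = mix_props[OF assms]
  note [measurable] = gp(1)
  define K where "K x = (if fd x = 0 then 0 else fd x * ln (fd x / g x))" for x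
  have K_meas[measurable]: "K \<in> borel_measurable borel" unfolding K_def by measurable
  have kl: "kl_pt (fd x) (g x) = ereal (K x)" for x
    using gp(2)[of x] by (simp add: kl_pt_def K_def)
  have Kge: "K x \<ge> fd x - g x" for x
  proof (cases "fd x = 0")
    case True then show ?thesis using gp(2)[of x] by (simp add: K_def)
  next
    case False
    then have f: "fd x > 0" using fd_nonneg[of x] by simp
    have gx: "g x > 0" using gp(2) by simp
    have "ln (g x / fd x) \<le> g x / fd x - 1" using f gx by (intro ln_le_minus_one) simp
    then have "ln (fd x / g x) \<ge> 1 - g x / fd x" using f gx by (simp add: ln_div)
    then have "fd x * ln (fd x / g x) \<ge> fd x * (1 - g x / fd x)" using f by (simp add: mult_left_mono)
    then show ?thesis using False f by (simp add: K_def right_diff_distrib)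
  qed
  have pw: "ennreal (- K x) + ennreal (fd x) \<le> ennreal (K x) + ennreal (g x)" for x
  proof (cases "K x \<ge> 0")
    case True
    then have "ennreal (- K x) + ennreal (fd x) = ennreal (fd x)" by (simp add: ennreal_neg)
    also have "\<dots> \<le> ennreal (K x + g x)" using Kge[of x] by (intro ennreal_leI) simp
    also have "\<dots> = ennreal (K x) + ennreal (g x)" using True gp(2)[of x] by (intro ennreal_plus) auto
    finally show ?thesis .
  next
    case False
    then have "ennreal (- K x) + ennreal (fd x) = ennreal (- K x + fd x)"
      using fd_nonneg[of x] by (intro ennreal_plus[symmetric]) auto
    also have "\<dots> \<le> ennreal (g x)" using Kge[of x] by (intro ennreal_leI) simp
    also have "\<dots> = ennreal (K x) + ennreal (g x)" using False by (simp add: ennreal_neg)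
    finally show ?thesis .
  qed
  define P where "P = (\<integral>\<^sup>+ x. ennreal (K x) \<partial>lborel)"
  define N where "N = (\<integral>\<^sup>+ x. ennreal (- K x) \<partial>lborel)"
  have i1: "(\<integral>\<^sup>+x. ennreal (fd x) \<partial>lborel) = 1" using int_indA by (simp add: fd_def)
  have "N + 1 = (\<integral>\<^sup>+ x. ennreal (- K x) + ennreal (fd x) \<partial>lborel)"
    unfolding N_def i1[symmetric] by (rule nn_integral_add[symmetric]) measurable
  also have "\<dots> \<le> (\<integral>\<^sup>+ x. ennreal (K x) + ennreal (g x) \<partial>lborel)"
    by (intro nn_integral_mono pw)
  also have "\<dots> = P + 1"
    unfolding P_def gp(3)[symmetric] by (rule nn_integral_add) measurable
  finally have "1 + N \<le> 1 + P" by (simp add: add.commute)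
  then have "N \<le> P" by (simp add: ennreal_add_left_cancel_le)
  have "KL fd g = enn2ereal P - enn2ereal N"
    unfolding KL_def P_def N_def kl nn_integral_completion by simp
  moreover have "enn2ereal N \<le> enn2ereal P" using \<open>N \<le> P\<close> by (simp add: less_eq_ennreal.rep_eq)
  ultimately show ?thesis by (simp add: ereal_diff_positive)
qed

end



lemma riemann_sum_ge:
  fixes f :: "real \<Rightarrow> real"
  assumes cont: "continuous_on UNIV f" and mono: "\<And>x y. 0 \<le> x \<Longrightarrow> x \<le> y \<Longrightarrow> f y \<le> f x"
    and t: "t > 0" and u0: "u0 \<ge> 0"
  shows "integral {u0..u0 + real J * t} f \<le> (\<Sum>j<J. t * f (u0 + real j * t))"
proof (induction J)
  case 0 then show ?case by simp
next
  case (Suc J)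
  define b where "b = u0 + real J * t"
  have intg: "f integrable_on {p..q}" for p q
    using cont by (intro integrable_continuous_real) (auto intro: continuous_on_subset)
  have "integral {u0..u0 + real (Suc J) * t} f = integral {u0..b} f + integral {b..b+t} f"
  proof -
    have "u0 + real (Suc J) * t = b + t" by (simp add: b_def algebra_simps)
    moreover have "integral {u0..b + t} f = integral {u0..b} f + integral {b..b+t} f"
      by (rule Henstock_Kurzweil_Integration.integral_combine[symmetric]) (use t u0 intg in \<open>auto simp: b_def\<close>)
    ultimately show ?thesis by simp
  qed
  also have "integral {b..b+t} f \<le> integral {b..b+t} (\<lambda>_. f b)"
    using intg u0 t by (intro integral_le) (auto simp: b_def intro!: mono)
  also have "\<dots> = t * f b" using t by simp
  finally show ?case using Suc.IH by (simp add: b_def)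
qed

lemma riemann_half:
  fixes f :: "real \<Rightarrow> real"
  assumes cont: "continuous_on UNIV f" and mono: "\<And>x y. 0 \<le> x \<Longrightarrow> x \<le> y \<Longrightarrow> f y \<le> f x"
    and nonneg: "\<And>x. 0 \<le> f x"
    and t: "t > 0" and u0: "0 \<le> u0" "u0 \<le> t" and r: "t \<le> r"
  shows "\<exists>J. (\<forall>j<J. u0 + real j * t \<le> r) \<and> integral {0..r} f - t * f 0 \<le> (\<Sum>j<J. t * f (u0 + real j * t))"
proof -
  define J where "J = nat \<lfloor>(r - u0) / t\<rfloor> + 1"
  have intg: "f integrable_on {p..q}" for p q
    using cont by (intro integrable_continuous_real) (auto intro: continuous_on_subset)
  have fl: "0 \<le> (r - u0) / t" using t u0 r by simp
  have J1: "u0 + real j * t \<le> r" if "j < J" for j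
  proof -
    have "real j \<le> real (nat \<lfloor>(r - u0) / t\<rfloor>)" using that by (simp add: J_def)
    also have "\<dots> \<le> (r - u0) / t" using fl by simp
    finally have "real j * t \<le> r - u0" using t by (simp add: pos_le_divide_eq)
    then show ?thesis by simp
  qed
  have J2: "r \<le> u0 + real J * t"
  proof -
    have "(r - u0) / t \<le> real J" using fl unfolding J_def by linarith
    then show ?thesis using t by (simp add: pos_divide_le_eq algebra_simps)
  qed
  have "integral {0..r} f = integral {0..u0} f + integral {u0..r} f"
    by (rule Henstock_Kurzweil_Integration.integral_combine[symmetric]) (use u0 r intg in auto)
  also have "integral {0..u0} f \<le> integral {0..u0} (\<lambda>_. f 0)"
    using intg by (intro integral_le) (auto intro!: mono)
  also have "\<dots> = u0 * f 0" using u0 by simp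
  also have "\<dots> \<le> t * f 0" using u0 nonneg[of 0] by (intro mult_right_mono) auto
  also have "integral {u0..r} f \<le> integral {u0..u0 + real J * t} f"
  proof -
    have "integral {u0..u0 + real J * t} f = integral {u0..r} f + integral {r..u0 + real J * t} f"
      by (rule Henstock_Kurzweil_Integration.integral_combine[symmetric]) (use J2 u0 r intg in auto)
    moreover have "0 \<le> integral {r..u0 + real J * t} f" using intg nonneg by (intro integral_nonneg) auto
    ultimately show ?thesis by simp
  qed
  also have "\<dots> \<le> (\<Sum>j<J. t * f (u0 + real j * t))"
    by (rule riemann_sum_ge[OF cont mono t u0(1)])
  finally show ?thesis using J1 by (intro exI[of _ J]) auto
qed

lemma nd_cont: "\<sigma> > 0 \<Longrightarrow> continuous_on UNIV (normal_density 0 \<sigma>)"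
  unfolding normal_density_def by (intro continuous_intros) auto

lemma nd_mono: "0 \<le> x \<Longrightarrow> x \<le> y \<Longrightarrow> normal_density 0 \<sigma> y \<le> normal_density 0 \<sigma> x"
  unfolding normal_density_def
  by (intro mult_left_mono exp_mono divide_right_mono) (auto intro!: power_mono)

lemma nd_sym: "normal_density 0 \<sigma> (- x) = normal_density 0 \<sigma> x"
  by (simp add: normal_density_def)

lemma nd_shift: "normal_density \<mu> \<sigma> x = normal_density 0 \<sigma> (x - \<mu>)"
  by (simp add: normal_density_def)

lemma nd_zero: assumes "\<sigma> > 0" shows "\<sigma> * normal_density 0 \<sigma> 0 \<le> 1/2"
proof -
  have "sqrt (2 * pi * \<sigma>\<^sup>2) = sqrt (2 * pi) * \<sigma>" using assms by (simp add: real_sqrt_mult)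
  moreover have "sqrt (2 * pi) \<ge> 2"
  proof -
    have "sqrt 4 \<le> sqrt (2 * pi)" using pi_gt3 by (intro real_sqrt_le_mono) simp
    then show ?thesis by simp
  qed
  ultimately show ?thesis using assms by (simp add: normal_density_def field_simps)
qed

lemma nd_mass:
  assumes s: "\<sigma> > 0" and r: "r > 0"
  shows "1 - \<sigma>\<^sup>2 / r\<^sup>2 \<le> 2 * integral {0..r} (normal_density 0 \<sigma>)"
proof -
  let ?f = "normal_density 0 \<sigma>"
  have i2: "integrable lborel (\<lambda>u. ?f u * u^2)"
    using integrable_normal_moment[OF s, of 0 2] by simp
  have m2: "(\<integral>u. ?f u * u^2 \<partial>lborel) = \<sigma>\<^sup>2"
    using integral_normal_moment_even[OF s, of 0 1] by (simp add: power2_eq_square)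
  have iI: "integrable lborel (\<lambda>u. ?f u * indicator {-r..r} u)"
    by (intro integrable_real_mult_indicator integrable_normal_density[OF s]) auto
  have "1 = (\<integral>u. ?f u \<partial>lborel)" using s by simp
  also have "\<dots> \<le> (\<integral>u. ?f u * indicator {-r..r} u + ?f u * u^2 / r^2 \<partial>lborel)"
  proof (intro integral_mono)
    show "integrable lborel (\<lambda>u. ?f u * indicator {-r..r} u + ?f u * u^2 / r^2)"
      using iI i2 by (intro Bochner_Integration.integrable_add integrable_divide) auto
    fix u
    show "?f u \<le> ?f u * indicator {-r..r} u + ?f u * u^2 / r^2"
    proof (cases "u \<in> {-r..r}")
      case True then show ?thesis using r by simp
    next
      case False
      then have "r^2 \<le> u^2" using r by (auto simp: abs_le_square_iff[symmetric] abs_if)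
      then have "1 \<le> u^2 / r^2" using r by simp
      then have "?f u * 1 \<le> ?f u * (u^2 / r^2)" by (intro mult_left_mono) auto
      then show ?thesis using False by simp
    qed
  qed (use s in simp)
  also have "\<dots> = (\<integral>u. ?f u * indicator {-r..r} u \<partial>lborel) + \<sigma>\<^sup>2 / r\<^sup>2"
    using iI i2 m2 by (subst Bochner_Integration.integral_add) auto
  also have "(\<integral>u. ?f u * indicator {-r..r} u \<partial>lborel) = integral {-r..r} ?f"
  proof -
    have "set_integrable lborel {-r..r} ?f"
      unfolding set_integrable_def using iI by (simp add: mult.commute)
    from set_borel_integral_eq_integral(2)[OF this] show ?thesis
      by (simp add: set_lebesgue_integral_def mult.commute)
  qed
  also have "integral {-r..r} ?f = integral {-r..0} ?f + integral {0..r} ?f"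
    using r by (intro Henstock_Kurzweil_Integration.integral_combine[symmetric] integrable_continuous_real
        continuous_on_subset[OF nd_cont[OF s]]) auto
  also have "integral {-r..0} ?f = integral {0..r} ?f"
    using Henstock_Kurzweil_Integration.integral_reflect_real[of r 0 ?f] by (simp add: nd_sym)
  finally show ?thesis by simp
qed




lemma grid_lower:
  fixes x r t \<sigma> :: real and G :: "int set"
  assumes t: "t > 0" and s: "\<sigma> > 0" and tr: "t \<le> r"
    and G: "\<And>k::int. \<bar>real_of_int k * t - x\<bar> \<le> r \<Longrightarrow> k \<in> G" and fin: "finite G"
  shows "2 * (integral {0..r} (normal_density 0 \<sigma>) - t * normal_density 0 \<sigma> 0)
           \<le> t * (\<Sum>k\<in>G. normal_density 0 \<sigma> (x - real_of_int k * t))"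
proof -
  let ?f = "normal_density 0 \<sigma>"
  define k0 where "k0 = \<lceil>x / t\<rceil>"
  define u0 where "u0 = real_of_int k0 * t - x"
  have a1: "x / t \<le> real_of_int k0" "real_of_int k0 < x / t + 1" unfolding k0_def by linarith+
  have "x \<le> real_of_int k0 * t" using a1(1) t by (simp add: pos_divide_le_eq)
  moreover have "real_of_int k0 * t < (x / t + 1) * t" using a1(2) t by (intro mult_strict_right_mono) auto
  moreover have "(x / t + 1) * t = x + t" using t by (simp add: distrib_right)
  ultimately have "real_of_int k0 * t < x + t" by simp
  moreover have "x \<le> real_of_int k0 * t" using a1(1) t by (simp add: pos_divide_le_eq)
  ultimately have u0: "0 \<le> u0" "u0 < t" unfolding u0_def by auto
  define v0 where "v0 = t - u0"
  have v0: "0 \<le> v0" "v0 \<le> t" using u0 by (auto simp: v0_def)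
  note rh = riemann_half[OF nd_cont[OF s] nd_mono normal_density_nonneg t]
  obtain J where J1: "\<forall>j<J. u0 + real j * t \<le> r"
    and J2: "integral {0..r} ?f - t * ?f 0 \<le> (\<Sum>j<J. t * ?f (u0 + real j * t))"
    using rh[of u0 r] u0 tr by auto
  obtain J' where J1': "\<forall>j<J'. v0 + real j * t \<le> r"
    and J2': "integral {0..r} ?f - t * ?f 0 \<le> (\<Sum>j<J'. t * ?f (v0 + real j * t))"
    using rh[of v0 r] v0 tr by auto
  define R where "R = (\<lambda>j. k0 + int j) ` {..<J}"
  define L where "L = (\<lambda>j. k0 - 1 - int j) ` {..<J'}"
  have RG: "R \<subseteq> G"
  proof
    fix k assume "k \<in> R"
    then obtain j where j: "j < J" "k = k0 + int j" by (auto simp: R_def)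
    have "real_of_int k * t - x = u0 + real j * t" using j by (simp add: u0_def algebra_simps)
    then show "k \<in> G" using J1 j u0 t by (intro G) simp
  qed
  have LG: "L \<subseteq> G"
  proof
    fix k assume "k \<in> L"
    then obtain j where j: "j < J'" "k = k0 - 1 - int j" by (auto simp: L_def)
    have kk: "real_of_int k = real_of_int k0 - 1 - real j" using j(2) by simp
    have "real_of_int k * t - x = - (v0 + real j * t)" unfolding kk by (simp add: u0_def v0_def algebra_simps)
    moreover have "0 \<le> v0 + real j * t" using v0 t by simp
    moreover have "v0 + real j * t \<le> r" using J1' j by simp
    ultimately show "k \<in> G" by (intro G) (simp add: abs_minus_commute)
  qed
  have RL: "R \<inter> L = {}" by (auto simp: R_def L_def)
  have sR: "(\<Sum>k\<in>R. ?f (x - real_of_int k * t)) = (\<Sum>j<J. ?f (u0 + real j * t))"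
  proof -
    have "(\<Sum>k\<in>R. ?f (x - real_of_int k * t)) = (\<Sum>j<J. ?f (x - real_of_int (k0 + int j) * t))"
      unfolding R_def by (subst sum.reindex) (auto simp: inj_on_def)
    also have "\<dots> = (\<Sum>j<J. ?f (u0 + real j * t))"
    proof (intro sum.cong refl)
      fix j
      have "x - real_of_int (k0 + int j) * t = - (u0 + real j * t)" by (simp add: u0_def algebra_simps)
      then show "?f (x - real_of_int (k0 + int j) * t) = ?f (u0 + real j * t)"
        using nd_sym[of \<sigma> "u0 + real j * t"] by simp
    qed
    finally show ?thesis .
  qed
  have sL: "(\<Sum>k\<in>L. ?f (x - real_of_int k * t)) = (\<Sum>j<J'. ?f (v0 + real j * t))"
  proof -
    have "(\<Sum>k\<in>L. ?f (x - real_of_int k * t)) = (\<Sum>j<J'. ?f (x - real_of_int (k0 - 1 - int j) * t))"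
      unfolding L_def by (subst sum.reindex) (auto simp: inj_on_def)
    also have "\<dots> = (\<Sum>j<J'. ?f (v0 + real j * t))"
    proof (intro sum.cong refl)
      fix j
      have "x - real_of_int (k0 - 1 - int j) * t = v0 + real j * t" by (simp add: u0_def v0_def algebra_simps)
      then show "?f (x - real_of_int (k0 - 1 - int j) * t) = ?f (v0 + real j * t)" by simp
    qed
    finally show ?thesis .
  qed
  have "(\<Sum>k\<in>R \<union> L. ?f (x - real_of_int k * t)) \<le> (\<Sum>k\<in>G. ?f (x - real_of_int k * t))"
    using RG LG fin by (intro sum_mono2) auto
  moreover have "(\<Sum>k\<in>R \<union> L. ?f (x - real_of_int k * t))
      = (\<Sum>k\<in>R. ?f (x - real_of_int k * t)) + (\<Sum>k\<in>L. ?f (x - real_of_int k * t))"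
    using RL by (intro sum.union_disjoint) (auto simp: R_def L_def)
  ultimately have "(\<Sum>j<J. ?f (u0 + real j * t)) + (\<Sum>j<J'. ?f (v0 + real j * t))
      \<le> (\<Sum>k\<in>G. ?f (x - real_of_int k * t))" using sR sL by simp
  then have le1: "t * ((\<Sum>j<J. ?f (u0 + real j * t)) + (\<Sum>j<J'. ?f (v0 + real j * t)))
      \<le> t * (\<Sum>k\<in>G. ?f (x - real_of_int k * t))" using t by (intro mult_left_mono) auto
  have eq1: "t * ((\<Sum>j<J. ?f (u0 + real j * t)) + (\<Sum>j<J'. ?f (v0 + real j * t)))
      = (\<Sum>j<J. t * ?f (u0 + real j * t)) + (\<Sum>j<J'. t * ?f (v0 + real j * t))"
    by (simp add: sum_distrib_left distrib_left)
  have "2 * (integral {0..r} ?f - t * ?f 0) \<le> (\<Sum>j<J. t * ?f (u0 + real j * t)) + (\<Sum>j<J'. t * ?f (v0 + real j * t))"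
    using add_mono[OF J2 J2'] by simp
  also have "\<dots> \<le> t * (\<Sum>k\<in>G. ?f (x - real_of_int k * t))" using le1 eq1 by simp
  finally show ?thesis .
qed




context fc begin

definition W :: "real \<Rightarrow> real set" where "W \<rho> = {z. infdist z A \<le> \<rho>}"

lemma W_compact: "\<rho> > 0 \<Longrightarrow> compact (W \<rho>)"
  unfolding W_def using A_ne A_compact by (intro compact_infdist_le) auto

lemma W_choice:
  assumes d: "\<delta> > 0"
  shows "\<exists>\<rho>>0. emeasure lborel (W \<rho>) < ennreal (a * (1 + \<delta>))"
proof -
  define S where "S n = W (1 / Suc n)" for n
  have Sc: "compact (S n)" for n unfolding S_def by (intro W_compact) simp
  have "(INF n. emeasure lborel (S n)) = emeasure lborel (\<Inter>n. S n)"
  proof (rule INF_emeasure_decseq)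
    show "range S \<subseteq> sets lborel" using Sc by (auto intro: borel_compact)
    show "decseq S" unfolding decseq_def S_def W_def
    proof (intro allI impI subsetI)
      fix m n :: nat and z assume "m \<le> n" "z \<in> {z. infdist z A \<le> 1 / real (Suc n)}"
      moreover have "1 / real (Suc n) \<le> 1 / real (Suc m)" using \<open>m \<le> n\<close> by (simp add: frac_le)
      ultimately show "z \<in> {z. infdist z A \<le> 1 / real (Suc m)}" by auto
    qed
    show "emeasure lborel (S n) \<noteq> \<infinity>" for n using emeasure_compact_finite[OF Sc[of n]] by simp
  qed
  also have "(\<Inter>n. S n) = A"
  proof
    show "A \<subseteq> (\<Inter>n. S n)" by (auto simp: S_def W_def)
    show "(\<Inter>n. S n) \<subseteq> A"
    proof
      fix z assume z: "z \<in> (\<Inter>n. S n)"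
      have "infdist z A = 0"
      proof (rule ccontr)
        assume "infdist z A \<noteq> 0"
        then have "infdist z A > 0" using infdist_nonneg[of z A] by simp
        then obtain n where "1 / real (Suc n) < infdist z A"
          using reals_Archimedean[of "infdist z A"] by (metis inverse_eq_divide)
        moreover have "z \<in> S n" using z by auto
        ultimately show False by (auto simp: S_def W_def)
      qed
      then have "z \<in> closure A" using A_ne by (simp add: in_closure_iff_infdist_zero)
      then show "z \<in> A" using A_compact by (simp add: compact_imp_closed closure_closed)
    qed
  qed
  also have "emeasure lborel A < ennreal (a * (1 + \<delta>))"
    using a_eq a_pos d by (simp add: ennreal_lessI)
  finally obtain n where "emeasure lborel (S n) < ennreal (a * (1 + \<delta>))"
    by (auto simp: INF_less_iff)
  then show ?thesis by (intro exI[of _ "1 / Suc n"]) (auto simp: S_def)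
qed

end



context fc begin

lemma KL_small:
  assumes e: "\<epsilon> > 0"
  shows "\<exists>g\<in>gauss_mixtures. KL fd g \<le> ereal \<epsilon>"
proof -
  define \<delta> where "\<delta> = min (1/4) (\<epsilon> / 6)"
  have d0: "\<delta> > 0" and d1: "\<delta> \<le> 1/4" and de: "6 * \<delta> \<le> \<epsilon>" using e by (auto simp: \<delta>_def)
  obtain \<rho> where \<rho>: "\<rho> > 0" and Wm: "emeasure lborel (W \<rho>) < ennreal (a * (1 + \<delta>))"
    using W_choice[OF d0] by blast
  define r where "r = \<rho> / 2"
  define \<sigma> where "\<sigma> = r * sqrt \<delta>"
  define t where "t = \<delta> * \<sigma>"
  have r0: "r > 0" using \<rho> by (simp add: r_def)
  have s0: "\<sigma> > 0" using r0 d0 by (simp add: \<sigma>_def)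
  have t0: "t > 0" using s0 d0 by (simp add: t_def)
  have sq1: "sqrt \<delta> \<le> 1" using d1 by simp
  have tr: "t \<le> r"
  proof -
    have "t = r * (\<delta> * sqrt \<delta>)" by (simp add: t_def \<sigma>_def)
    also have "\<delta> * sqrt \<delta> \<le> 1 * 1" using d1 d0 sq1 by (intro mult_mono) auto
    finally show ?thesis using r0 by simp
  qed
  have sr: "\<sigma>\<^sup>2 / r\<^sup>2 = \<delta>" using r0 d0 by (simp add: \<sigma>_def power_mult_distrib)
  define G where "G = {k::int. \<exists>y\<in>A. \<bar>real_of_int k * t - y\<bar> \<le> r}"
  define M where "M = \<lceil>(r + 1) / t\<rceil>"
  have finG: "finite G"
  proof (rule finite_subset)
    show "G \<subseteq> {-M..M}"
    proof
      fix k assume "k \<in> G"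
      then obtain y where y: "y \<in> A" "\<bar>real_of_int k * t - y\<bar> \<le> r" by (auto simp: G_def)
      have "\<bar>y\<bar> \<le> 1" using y A_sub by auto
      then have "\<bar>real_of_int k\<bar> * t \<le> r + 1" using y t0 by (simp add: abs_mult)
      then have "\<bar>real_of_int k\<bar> \<le> (r + 1) / t" using t0 by (simp add: pos_le_divide_eq)
      also have "\<dots> \<le> real_of_int M" unfolding M_def by simp
      finally have "\<bar>k\<bar> \<le> M" by linarith
      then show "k \<in> {-M..M}" by auto
    qed
  qed simp
  obtain y0 where y0: "y0 \<in> A" using A_ne by auto
  have "\<lfloor>y0 / t\<rfloor> \<in> G"
  proof -
    have f1: "real_of_int \<lfloor>y0 / t\<rfloor> \<le> y0 / t" and f2: "y0 / t < real_of_int \<lfloor>y0 / t\<rfloor> + 1" by linarith+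
    have "real_of_int \<lfloor>y0 / t\<rfloor> * t \<le> y0" using f1 t0 by (metis pos_le_divide_eq)
    moreover have "y0 < (real_of_int \<lfloor>y0 / t\<rfloor> + 1) * t" using f2 t0 by (metis pos_divide_less_eq)
    ultimately
    have "\<bar>real_of_int \<lfloor>y0 / t\<rfloor> * t - y0\<bar> \<le> r" using tr by (simp add: algebra_simps)
    then show ?thesis using y0 by (auto simp: G_def)
  qed
  then have Gne: "G \<noteq> {}" by auto
  define N where "N = card G"
  have N1: "N \<ge> 1" using finG Gne by (simp add: N_def Suc_le_eq card_gt_0_iff)
  define F where "F k = {real_of_int k * t ..< real_of_int k * t + t}" for k :: int
  have disj: "disjoint_family_on F G"
    unfolding disjoint_family_on_def
  proof (intro ballI impI)
    fix k l :: int assume "k \<noteq> l"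
    show "F k \<inter> F l = {}"
    proof (rule ccontr)
      assume "F k \<inter> F l \<noteq> {}"
      then obtain z where z: "z \<in> F k" "z \<in> F l" by auto
      then have "real_of_int (k - l) * t < t" "real_of_int (l - k) * t < t"
        by (auto simp: F_def algebra_simps)
      then have "real_of_int (k - l) < 1" "real_of_int (l - k) < 1" using t0 by simp_all
      then show False using \<open>k \<noteq> l\<close> by linarith
    qed
  qed
  have FW: "(\<Union>k\<in>G. F k) \<subseteq> W \<rho>"
  proof
    fix z assume "z \<in> (\<Union>k\<in>G. F k)"
    then obtain k y where k: "z \<in> F k" "y \<in> A" "\<bar>real_of_int k * t - y\<bar> \<le> r" by (auto simp: G_def)
    have k1: "real_of_int k * t - y \<le> r" "y - real_of_int k * t \<le> r" using k(3) by (auto simp: abs_le_iff)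
    have k2: "real_of_int k * t \<le> z" "z < real_of_int k * t + t" using k(1) by (auto simp: F_def)
    have "dist z y \<le> \<rho>" unfolding dist_real_def abs_le_iff using k1 k2 tr r_def by linarith
    then show "z \<in> W \<rho>" using k by (auto simp: W_def intro: infdist_le2)
  qed
  have "ennreal (real N * t) = (\<Sum>k\<in>G. emeasure lborel (F k))"
    using t0 by (simp add: F_def N_def ennreal_of_nat_eq_real_of_nat ennreal_mult)
  also have "\<dots> = emeasure lborel (\<Union>k\<in>G. F k)"
  proof -
    have Fs: "F ` G \<subseteq> sets lborel" by (auto simp: F_def)
    show ?thesis by (rule sum_emeasure[OF Fs disj finG])
  qed
  also have "\<dots> \<le> emeasure lborel (W \<rho>)"
    using FW W_compact[OF \<rho>] by (intro emeasure_mono) (auto intro: borel_compact)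
  finally have "ennreal (real N * t) < ennreal (a * (1 + \<delta>))" using Wm by (rule order_le_less_trans)
  then have Nt: "real N * t < a * (1 + \<delta>)" using t0 by (subst (asm) ennreal_less_iff) auto
  obtain h where h: "bij_betw h {0..<N} G" using ex_bij_betw_nat_finite[OF finG] unfolding N_def by blast
  let ?f = "normal_density 0 \<sigma>"
  define S where "S x = (\<Sum>k\<in>G. ?f (x - real_of_int k * t))" for x
  define g where "g x = (\<Sum>j<N. (1 / real N) * normal_density (real_of_int (h j) * t) \<sigma> x)" for x
  have g_eq: "g x = S x / real N" for x
  proof -
    have "g x = (1 / real N) * (\<Sum>j\<in>{0..<N}. ?f (x - real_of_int (h j) * t))"
      unfolding g_def sum_distrib_left atLeast0LessThan
      by (intro sum.cong refl) (simp add: nd_shift[of "real_of_int (h _) * t"])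
    also have "(\<Sum>j\<in>{0..<N}. ?f (x - real_of_int (h j) * t)) = S x"
      unfolding S_def by (rule sum.reindex_bij_betw[OF h])
    finally show ?thesis by simp
  qed
  have gmix: "g \<in> gauss_mixtures"
    unfolding gauss_mixtures_def
  proof (intro CollectI exI conjI)
    show "1 \<le> N" by (rule N1)
    show "\<forall>j<N. 0 \<le> 1 / real N \<and> 0 < \<sigma>" using s0 by simp
    show "(\<Sum>j<N. 1 / real N) = 1" using N1 by simp
    show "g = (\<lambda>x. \<Sum>j<N. 1 / real N * normal_density (real_of_int (h j) * t) \<sigma> x)"
      by (simp add: g_def[abs_def])
  qed
  have glow: "(1 - 2 * \<delta>) / (a * (1 + \<delta>)) \<le> g x" if xA: "x \<in> A" for x
  proof -
    have gl: "2 * (integral {0..r} ?f - t * ?f 0) \<le> t * S x"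
      unfolding S_def by (rule grid_lower[OF t0 s0 tr _ finG]) (use xA in \<open>auto simp: G_def\<close>)
    have m: "1 - \<delta> \<le> 2 * integral {0..r} ?f" using nd_mass[OF s0 r0] sr by simp
    have "t * ?f 0 = \<delta> * (\<sigma> * ?f 0)" by (simp add: t_def)
    also have "\<dots> \<le> \<delta> * (1/2)" using nd_zero[OF s0] d0 by (intro mult_left_mono) auto
    finally have z: "2 * (t * ?f 0) \<le> \<delta>" by simp
    have tS: "1 - 2 * \<delta> \<le> t * S x" using gl m z by (smt (verit))
    have Npos: "real N * t > 0" using N1 t0 by simp
    have "(1 - 2 * \<delta>) / (a * (1 + \<delta>)) \<le> (1 - 2 * \<delta>) / (real N * t)"
      using Nt Npos d1 by (intro divide_left_mono) auto
    also have "\<dots> \<le> (t * S x) / (real N * t)" using tS Npos by (intro divide_right_mono) auto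
    also have "\<dots> = g x" using t0 N1 by (simp add: g_eq)
    finally show ?thesis .
  qed
  have ln_bd: "c * ln (c / g x) \<le> c * \<epsilon>" if xA: "x \<in> A" for x
  proof -
    have L0: "(1 - 2 * \<delta>) / (a * (1 + \<delta>)) > 0" using d1 d0 a_pos by simp
    have gx: "g x > 0" using glow[OF xA] L0 by linarith
    have "c / g x \<le> c / ((1 - 2 * \<delta>) / (a * (1 + \<delta>)))"
      by (rule divide_left_mono[OF glow[OF xA]]) (use c_pos mult_pos_pos[OF gx L0] in \<open>simp_all\<close>)
    also have "\<dots> = (1 + \<delta>) / (1 - 2 * \<delta>)" using a_pos d0 d1 by (simp add: c_eq field_simps)
    finally have q: "c / g x \<le> (1 + \<delta>) / (1 - 2 * \<delta>)" .
    have "ln (c / g x) \<le> ln ((1 + \<delta>) / (1 - 2 * \<delta>))"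
      using q gx c_pos by (intro ln_mono) auto
    also have "\<dots> \<le> (1 + \<delta>) / (1 - 2 * \<delta>) - 1" using d0 d1 by (intro ln_le_minus_one) auto
    also have "\<dots> = 3 * \<delta> / (1 - 2 * \<delta>)" using d1 by (simp add: field_simps)
    also have "\<dots> \<le> 3 * \<delta> / (1/2)" using d0 d1 by (intro divide_left_mono) auto
    also have "\<dots> \<le> \<epsilon>" using de by simp
    finally show ?thesis using c_pos by (intro mult_left_mono) auto
  qed
  have gpos: "g x > 0" if "x \<in> A" for x
  proof -
    have "(1 - 2 * \<delta>) / (a * (1 + \<delta>)) > 0" using d1 d0 a_pos by simp
    then show ?thesis using glow[OF that] by linarith
  qed
  have pw: "e2ennreal (kl_pt (fd x) (g x)) \<le> ennreal \<epsilon> * ennreal (c * indicator A x)" for x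
  proof (cases "x \<in> A")
    case True
    then have "kl_pt (fd x) (g x) = ereal (c * ln (c / g x))"
      using c_pos gpos[OF True] by (simp add: kl_pt_def fd_def)
    then have "e2ennreal (kl_pt (fd x) (g x)) = ennreal (c * ln (c / g x))" by simp
    also have "\<dots> \<le> ennreal (c * \<epsilon>)" using ln_bd[OF True] by (intro ennreal_leI)
    also have "\<dots> = ennreal \<epsilon> * ennreal (c * indicator A x)" using True e c_pos
      by (simp add: ennreal_mult[symmetric] mult.commute)
    finally show ?thesis .
  next
    case False
    then show ?thesis by (simp add: kl_pt_def fd_def)
  qed
  define P where "P = (\<integral>\<^sup>+ x. e2ennreal (kl_pt (fd x) (g x)) \<partial>lebesgue)"
  have "P \<le> (\<integral>\<^sup>+ x. ennreal \<epsilon> * ennreal (c * indicator A x) \<partial>lborel)"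
    unfolding P_def nn_integral_completion by (intro nn_integral_mono pw)
  also have "\<dots> = ennreal \<epsilon> * (\<integral>\<^sup>+ x. ennreal (c * indicator A x) \<partial>lborel)"
    by (rule nn_integral_cmult) measurable
  also have "\<dots> = ennreal \<epsilon>" using int_indA by simp
  finally have Pb: "P \<le> ennreal \<epsilon>" .
  have "KL fd g \<le> enn2ereal P"
    unfolding KL_def P_def by (intro ereal_diff_le_self) simp
  also have "\<dots> \<le> enn2ereal (ennreal \<epsilon>)" using Pb by (simp add: less_eq_ennreal.rep_eq)
  also have "\<dots> = ereal \<epsilon>" using e by (simp add: enn2ereal_ennreal)
  finally show ?thesis using gmix by blast
qed

end

theorem mainTheorem17:
  fixes A :: "real set" and c :: real and fd :: "real \<Rightarrow> real"
  assumes "fat_cantor A"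
    and "c = 1 / measure lebesgue A"
    and "fd = (\<lambda>x. c * indicator A x)"
  shows "is_density fd
    \<and> (\<integral>\<^sup>+ x. ennreal (x^2 * fd x) \<partial>lebesgue) < \<infinity>
    \<and> (INF g\<in>gauss_mixtures. KL fd g) = 0
    \<and> fd \<notin> F_Ent
    \<and> fd \<notin> F_CSSA"
proof -
  interpret fc A c fd using assms by unfold_locales
  have "(INF g\<in>gauss_mixtures. KL fd g) = 0"
  proof (rule antisym)
    show "(INF g\<in>gauss_mixtures. KL fd g) \<le> 0"
    proof (rule ereal_le_epsilon2)
      fix e :: real assume "0 < e"
      then obtain g where g: "g \<in> gauss_mixtures" "KL fd g \<le> ereal e" using KL_small by blast
      then have "(INF g\<in>gauss_mixtures. KL fd g) \<le> ereal e" by (meson INF_lower2)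
      then show "(INF g\<in>gauss_mixtures. KL fd g) \<le> 0 + ereal e" by simp
    qed
    show "0 \<le> (INF g\<in>gauss_mixtures. KL fd g)" by (rule INF_greatest) (rule KL_nonneg)
  qed
  then show ?thesis using is_dens moment not_Ent not_CSSA by blast
qed

end
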